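(* Let $G=(V,E)$ be a finite simple undirected graph, $n=|V|$, $G_0:=G$, and let $W_1,\dots,W_r$ be distinct subsets of $V$ such that for every $t\in\{1,\dots,r\}$, $W_t$ is a clique of $G_{t-1}$ with $|W_t|\ge2$ and $G_t:=G_{t-1}\mid W_t$. Let $F_0:=STAB(G)$ and $F_t:=\{x\in STAB(G)\mid x_{W_j}=1,\ j=1,\dots,t\}$. Suppose there is $k>0$ such that for all $t\in\{1,\dots,r\}$: (I) $|W_t|=k$ and the subgraph of $G_{t-1}$ induced by $\bigcup_{i=1}^tW_i$ is $k$-partite with vertex classes $V_t^1,\dots,V_t^k$; (II) $T_t:=(V_t,\mathcal W_t)$, with $V_t:=\bigcup_{i=1}^kV_t^i$ and $\mathcal W_t:=\{W_1,\dots,W_t\}$, is a strong hypertree; (III) for every $w\in V_t^0:=V\setminus V_t$ there exists $i\in\{1,\dots,k\}$ with $N_{G_{t-1}}(w)\cap V_t^i=\emptyset$. Then for all $t\in\{1,\dots,r\}$, the inequality $x_{W_t}\le1$ is facet defining for $F_{t-1}$.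
   Context: For a graph $G=(V,E)$, $\mathcal S(G)\subseteq\{0,1\}^V$ is the set of characteristic vectors of stable sets of $G$, and $STAB(G)=\mathrm{conv}\,\mathcal S(G)$. For $W\subseteq V$ and $x\in\mathbb R^V$, $x_W=\sum_{v\in W}x_v$. $N_H(u)$ is the neighborhood of $u$ in a graph $H$. The clique projection of a clique $W$ ($|W|\ge2$) of a graph $H=(V,E_H)$ is $H\mid W=(V,E_H\cup\{uv\notin E_H\mid u\ne v,\ W\subseteq N_H(u)\cup N_H(v)\})$. A hypergraph $(V_t,\mathcal W_t)$ with all hyperedges of size $k$ is a strong hypertree if either $\mathcal W_t=\{V_t\}$, or there is a vertex $v\in V_t$ incident to a hyperedge $W_i\in\mathcal W_t$ that shares exactly $k-1$ vertices with some other hyperedge, such that $(V_t\setminus\{v\},\mathcal W_t\setminus\{W_i\})$ is again a strong hypertree. An inequality is facet defining for a polytope $P$ if it is valid for $P$ and the face it defines has dimension $\dim P-1$. *)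

theory Defs
  imports "HOL-Analysis.Analysis"
begin

text \<open>Graphs: the vertex set is the finite type 'n (so V = UNIV, R^V = real^'n);
  edges are a symmetric irreflexive relation E.\<close>

definition simple_graph :: "('n \<times> 'n) set \<Rightarrow> bool" where
  "simple_graph E \<longleftrightarrow> sym E \<and> (\<forall>v. (v, v) \<notin> E)"

definition nbhd :: "('n \<times> 'n) set \<Rightarrow> 'n \<Rightarrow> 'n set" where
  "nbhd E u = {v. (u, v) \<in> E}"

definition stable_set :: "('n \<times> 'n) set \<Rightarrow> 'n set \<Rightarrow> bool" where
  "stable_set E S \<longleftrightarrow> (\<forall>u\<in>S. \<forall>v\<in>S. (u, v) \<notin> E)"

definition clique :: "('n \<times> 'n) set \<Rightarrow> 'n set \<Rightarrow> bool" where
  "clique E W \<longleftrightarrow> (\<forall>u\<in>W. \<forall>v\<in>W. u \<noteq> v \<longrightarrow> (u, v) \<in> E)"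

definition char_vec :: "'n::finite set \<Rightarrow> real ^ 'n" where
  "char_vec S = (\<chi> v. if v \<in> S then 1 else 0)"

definition STAB :: "('n::finite \<times> 'n) set \<Rightarrow> (real ^ 'n) set" where
  "STAB E = convex hull {char_vec S | S. stable_set E S}"

definition xsum :: "real ^ 'n \<Rightarrow> 'n::finite set \<Rightarrow> real" where
  "xsum x W = (\<Sum>v\<in>W. x $ v)"

definition clique_proj :: "('n \<times> 'n) set \<Rightarrow> 'n set \<Rightarrow> ('n \<times> 'n) set" where
  "clique_proj E W = E \<union> {(u, v). (u, v) \<notin> E \<and> u \<noteq> v \<and> W \<subseteq> nbhd E u \<union> nbhd E v}"

fun proj_seq :: "('n \<times> 'n) set \<Rightarrow> (nat \<Rightarrow> 'n set) \<Rightarrow> nat \<Rightarrow> ('n \<times> 'n) set" where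
  "proj_seq E W 0 = E"
| "proj_seq E W (Suc t) = clique_proj (proj_seq E W t) (W (Suc t))"

definition F_face :: "('n::finite \<times> 'n) set \<Rightarrow> (nat \<Rightarrow> 'n set) \<Rightarrow> nat \<Rightarrow> (real ^ 'n) set" where
  "F_face E W t = {x \<in> STAB E. \<forall>j\<in>{1..t}. xsum x (W j) = 1}"

definition k_partite_classes :: "('n \<times> 'n) set \<Rightarrow> 'n set \<Rightarrow> nat \<Rightarrow> (nat \<Rightarrow> 'n set) \<Rightarrow> bool" where
  "k_partite_classes E U k C \<longleftrightarrow>
     (\<Union>i\<in>{1..k}. C i) = U \<and>
     (\<forall>i\<in>{1..k}. \<forall>j\<in>{1..k}. i \<noteq> j \<longrightarrow> C i \<inter> C j = {}) \<and>
     (\<forall>i\<in>{1..k}. stable_set E (C i))"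

definition k_uniform_hypergraph :: "nat \<Rightarrow> 'n set \<Rightarrow> 'n set set \<Rightarrow> bool" where
  "k_uniform_hypergraph k Vt Ws \<longleftrightarrow> finite Vt \<and> (\<forall>W\<in>Ws. W \<subseteq> Vt \<and> card W = k)"

inductive strong_hypertree :: "nat \<Rightarrow> 'n set \<Rightarrow> 'n set set \<Rightarrow> bool" where
  base: "k_uniform_hypergraph k Vt {Vt} \<Longrightarrow> strong_hypertree k Vt {Vt}"
| step: "\<lbrakk> k_uniform_hypergraph k Vt Ws; v \<in> Vt; Wi \<in> Ws; v \<in> Wi;
           W' \<in> Ws; W' \<noteq> Wi; card (Wi \<inter> W') = k - 1;
           strong_hypertree k (Vt - {v}) (Ws - {Wi}) \<rbrakk>
         \<Longrightarrow> strong_hypertree k Vt Ws"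

definition facet_defining :: "(real ^ 'n::finite) set \<Rightarrow> real ^ 'n \<Rightarrow> real \<Rightarrow> bool" where
  "facet_defining P c b \<longleftrightarrow>
     (\<forall>x\<in>P. c \<bullet> x \<le> b) \<and> aff_dim {x \<in> P. c \<bullet> x = b} = aff_dim P - 1"

end

theory Submission
  imports Defs
begin

lemma inner_char_vec: "char_vec A \<bullet> x = xsum x A"
proof -
  have "char_vec A \<bullet> x = (\<Sum>i\<in>UNIV. if i \<in> A then x $ i else 0)"
    unfolding inner_vec_def char_vec_def by (intro sum.cong) auto
  also have "\<dots> = sum (($) x) (UNIV \<inter> A)" by (rule sum.inter_restrict[symmetric]) simp
  finally show ?thesis by (simp add: xsum_def)
qed

lemma xsum_char_vec: "xsum (char_vec S) A = real (card (S \<inter> A))"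
  by (simp add: xsum_def char_vec_def sum.If_cases Int_commute)

lemma char_vec_inj: "char_vec A = char_vec B \<Longrightarrow> A = B"
  by (auto simp: char_vec_def vec_eq_iff split: if_splits; metis zero_neq_one)

lemma clique_proj_mono: "E \<subseteq> clique_proj E W"
  by (auto simp: clique_proj_def)

lemma proj_seq_mono: "m \<le> m' \<Longrightarrow> proj_seq E W m \<subseteq> proj_seq E W m'"
  by (induction m' ) (auto simp: le_Suc_eq clique_proj_def)

lemma simple_clique_proj: "simple_graph E \<Longrightarrow> simple_graph (clique_proj E W)"
  unfolding simple_graph_def clique_proj_def sym_def by auto

lemma simple_proj_seq: "simple_graph E \<Longrightarrow> simple_graph (proj_seq E W m)"
  by (induction m) (auto intro: simple_clique_proj)

lemma stable_mono: "stable_set H S \<Longrightarrow> H' \<subseteq> H \<Longrightarrow> T \<subseteq> S \<Longrightarrow> stable_set H' T"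
  unfolding stable_set_def by blast

lemma clique_mono: "clique H S \<Longrightarrow> H \<subseteq> H' \<Longrightarrow> clique H' S"
  unfolding clique_def by blast

lemma stable_proj: "stable_set H S \<Longrightarrow> card (S \<inter> W) = 1 \<Longrightarrow> stable_set (clique_proj H W) S"
proof -
  assume st: "stable_set H S" and c: "card (S \<inter> W) = 1"
  then obtain w where w: "S \<inter> W = {w}" by (meson card_1_singletonE)
  show ?thesis unfolding stable_set_def clique_proj_def nbhd_def
  proof (intro ballI)
    fix u v assume u: "u \<in> S" and v: "v \<in> S"
    have "w \<in> W" "w \<in> S" using w by auto
    then show "(u, v) \<notin> H \<union> {(u, v). (u, v) \<notin> H \<and> u \<noteq> v \<and> W \<subseteq> {v. (u, v) \<in> H} \<union> {va. (v, va) \<in> H}}"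
      using st u v unfolding stable_set_def by blast
  qed
qed

lemma card_stable_clique: "stable_set H S \<Longrightarrow> clique H W \<Longrightarrow> card (S \<inter> (W::'n::finite set)) \<le> 1"
proof -
  assume "stable_set H S" "clique H W"
  then have "\<forall>a\<in>S \<inter> W. \<forall>b\<in>S \<inter> W. a = b"
    unfolding stable_set_def clique_def by blast
  then show ?thesis using card_le_Suc0_iff_eq[of "S \<inter> W"] by simp
qed

lemma hypertree_card: "strong_hypertree k Vt Ws \<Longrightarrow> card Vt + 1 = k + card Ws \<and> Ws \<noteq> {} \<and> finite Ws \<and> finite Vt"
proof (induction rule: strong_hypertree.induct)
  case (base k Vt) then show ?case by (simp add: k_uniform_hypergraph_def)
next
  case (step k Vt Ws v Wi W' )
  have fV: "finite Vt" using step.hyps(1) by (simp add: k_uniform_hypergraph_def)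
  have fW: "finite Ws" using step.IH by auto
  have "card (Vt - {v}) + 1 = card Vt" using fV step.hyps(2)
    by (metis card_Suc_Diff1 Suc_eq_plus1)
  moreover have "card (Ws - {Wi}) + 1 = card Ws" using fW step.hyps(3)
    by (metis card_Suc_Diff1 Suc_eq_plus1)
  ultimately show ?case using step.IH step.hyps fV fW by auto
qed

lemma validity_core:
  fixes Fm :: "'n::finite set set"
  assumes fin: "finite Fm" and st: "\<forall>S\<in>Fm. stable_set E S" and nn: "\<forall>S\<in>Fm. u S \<ge> 0"
    and s1: "sum u Fm = 1"
  shows "(\<forall>j\<in>{1..m}. clique (proj_seq E W (j-1)) (W j)) \<Longrightarrow>
    (\<forall>j\<in>{1..m}. (\<Sum>S\<in>Fm. u S * real (card (S \<inter> W j))) = 1) \<Longrightarrow>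
    \<forall>S\<in>Fm. u S > 0 \<longrightarrow> stable_set (proj_seq E W m) S \<and> (\<forall>j\<in>{1..m}. card (S \<inter> W j) = 1)"
proof (induction m)
  case 0
  then show ?case using st by simp
next
  case (Suc m)
  have IH: "\<forall>S\<in>Fm. u S > 0 \<longrightarrow> stable_set (proj_seq E W m) S \<and> (\<forall>j\<in>{1..m}. card (S \<inter> W j) = 1)"
  proof (rule Suc.IH)
    show "\<forall>j\<in>{1..m}. clique (proj_seq E W (j - 1)) (W j)" using Suc.prems(1) by simp
    show "\<forall>j\<in>{1..m}. (\<Sum>S\<in>Fm. u S * real (card (S \<inter> W j))) = 1" using Suc.prems(2) by simp
  qed
  have cl: "clique (proj_seq E W m) (W (Suc m))"
    using bspec[OF Suc.prems(1), of "Suc m"] by simp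
  have le1: "card (S \<inter> W (Suc m)) \<le> 1" if "S \<in> Fm" "u S > 0" for S
  proof -
    have "stable_set (proj_seq E W m) S" using IH that by simp
    then show ?thesis by (rule card_stable_clique[OF _ cl])
  qed
  have "(\<Sum>S\<in>Fm. u S * (1 - real (card (S \<inter> W (Suc m))))) =
        sum u Fm - (\<Sum>S\<in>Fm. u S * real (card (S \<inter> W (Suc m))))"
    by (simp add: algebra_simps sum_subtractf)
  also have "\<dots> = 0" using s1 bspec[OF Suc.prems(2), of "Suc m"] by simp
  finally have z: "(\<Sum>S\<in>Fm. u S * (1 - real (card (S \<inter> W (Suc m))))) = 0" .
  have nn2: "\<forall>S\<in>Fm. 0 \<le> u S * (1 - real (card (S \<inter> W (Suc m))))"
  proof
    fix S assume S: "S \<in> Fm"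
    show "0 \<le> u S * (1 - real (card (S \<inter> W (Suc m))))"
    proof (cases "u S > 0")
      case True then show ?thesis using le1[OF S True] by simp
    next
      case False then have "u S = 0" using nn S by force
      then show ?thesis by simp
    qed
  qed
  have each: "u S * (1 - real (card (S \<inter> W (Suc m)))) = 0" if "S \<in> Fm" for S
  proof -
    have "\<forall>S\<in>Fm. u S * (1 - real (card (S \<inter> W (Suc m)))) = 0"
      using sum_nonneg_eq_0_iff[OF fin, of "\<lambda>S. u S * (1 - real (card (S \<inter> W (Suc m))))"] nn2 z by simp
    then show ?thesis using that by simp
  qed
  show ?case
  proof (intro ballI impI)
    fix S assume S: "S \<in> Fm" and p: "u S > 0"
    have c1: "card (S \<inter> W (Suc m)) = 1" using each[OF S] p by simp
    have "stable_set (proj_seq E W (Suc m)) S" using stable_proj[OF _ c1] IH S p by simp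
    moreover have "\<forall>j\<in>{1..Suc m}. card (S \<inter> W j) = 1"
      proof
      fix j assume j: "j \<in> {1..Suc m}"
      show "card (S \<inter> W j) = 1"
      proof (cases "j = Suc m")
        case True then show ?thesis using c1 by simp
      next
        case False then have "j \<in> {1..m}" using j by auto
        then show ?thesis using IH S p by blast
      qed
    qed
    ultimately show "stable_set (proj_seq E W (Suc m)) S \<and> (\<forall>j\<in>{1..Suc m}. card (S \<inter> W j) = 1)" by blast
  qed
qed

lemma finite_stables: "finite {S::'n::finite set. stable_set E S}"
  by simp

lemma STAB_repr:
  assumes "x \<in> STAB E"
  shows "\<exists>u. (\<forall>S\<in>{S::'n::finite set. stable_set E S}. 0 \<le> u S) \<and> sum u {S. stable_set E S} = 1 \<and>
           x = (\<Sum>S\<in>{S. stable_set E S}. u S *\<^sub>R char_vec S)"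
proof -
  let ?Fm = "{S::'n set. stable_set E S}"
  have eq: "{char_vec S | S. stable_set E S} = char_vec ` ?Fm" by auto
  have fin: "finite (char_vec ` ?Fm)" by simp
  have inj: "inj_on char_vec ?Fm" by (meson char_vec_inj inj_onI)
  from assms obtain u where u: "\<forall>y\<in>char_vec ` ?Fm. 0 \<le> u y" "sum u (char_vec ` ?Fm) = 1"
      "(\<Sum>y\<in>char_vec ` ?Fm. u y *\<^sub>R y) = x"
    unfolding STAB_def eq convex_hull_finite[OF fin] by blast
  have "sum (u \<circ> char_vec) ?Fm = 1" using u(2) sum.reindex[OF inj, of u] by simp
  moreover have "x = (\<Sum>S\<in>?Fm. (u \<circ> char_vec) S *\<^sub>R char_vec S)"
    using u(3) sum.reindex[OF inj, of "\<lambda>y. u y *\<^sub>R y"] by simp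
  moreover have "\<forall>S\<in>?Fm. 0 \<le> (u \<circ> char_vec) S" using u(1) by simp
  ultimately show ?thesis by blast
qed

lemma inner_char_sum: "char_vec A \<bullet> (\<Sum>S\<in>Fm. u S *\<^sub>R char_vec S) = (\<Sum>S\<in>Fm. u S * real (card (S \<inter> A)))"
  by (simp add: inner_sum_right inner_char_vec xsum_char_vec)

lemma validity:
  fixes E :: "('n::finite \<times> 'n) set"
  assumes cl: "\<forall>j\<in>{1..t}. clique (proj_seq E W (j-1)) (W j)" and x: "x \<in> F_face E W (t-1)"
    and t: "t \<ge> 1"
  shows "char_vec (W t) \<bullet> x \<le> 1"
proof -
  let ?Fm = "{S::'n set. stable_set E S}"
  have xS: "x \<in> STAB E" and xe: "\<forall>j\<in>{1..t-1}. xsum x (W j) = 1"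
    using x by (auto simp: F_face_def)
  obtain u where u: "\<forall>S\<in>?Fm. 0 \<le> u S" "sum u ?Fm = 1" "x = (\<Sum>S\<in>?Fm. u S *\<^sub>R char_vec S)"
    using STAB_repr[OF xS] by blast
  have cl': "\<forall>j\<in>{1..t-1}. clique (proj_seq E W (j-1)) (W j)" using cl by auto
  have eq': "\<forall>j\<in>{1..t-1}. (\<Sum>S\<in>?Fm. u S * real (card (S \<inter> W j))) = 1"
    using xe u(3) inner_char_sum[of _ u ?Fm] inner_char_vec by metis
  have core: "\<forall>S\<in>?Fm. u S > 0 \<longrightarrow> stable_set (proj_seq E W (t-1)) S"
    using validity_core[OF finite_stables _ u(1) u(2) cl' eq'] by auto
  have clt: "clique (proj_seq E W (t-1)) (W t)" using cl t by auto
  have "char_vec (W t) \<bullet> x = (\<Sum>S\<in>?Fm. u S * real (card (S \<inter> W t)))"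
    using u(3) inner_char_sum by metis
  also have "\<dots> \<le> (\<Sum>S\<in>?Fm. u S)"
  proof (rule sum_mono)
    fix S assume S: "S \<in> ?Fm"
    show "u S * real (card (S \<inter> W t)) \<le> u S"
    proof (cases "u S > 0")
      case True
      then have "card (S \<inter> W t) \<le> 1" using core S card_stable_clique[OF _ clt] by blast
      then show ?thesis using True by simp
    next
      case False then have "u S = 0" using u(1) S by force
      then show ?thesis by simp
    qed
  qed
  finally show ?thesis using u(2) by simp
qed

lemma dim_le_aff_dim:
  fixes S :: "'a::euclidean_space set"
  assumes "a \<in> S"
  shows "int (dim S) \<le> aff_dim S + 1"
proof -
  let ?D = "(\<lambda>x. x - a) ` S"
  have ad: "aff_dim S = int (dim ?D)"
    by (rule aff_dim_eq_dim_subtract) (simp add: assms hull_inc)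
  have "S \<subseteq> span (insert a ?D)"
  proof
    fix x assume "x \<in> S"
    then have "x - a \<in> span (insert a ?D)" by (simp add: span_base)
    moreover have "a \<in> span (insert a ?D)" by (simp add: span_base)
    ultimately have "(x - a) + a \<in> span (insert a ?D)" by (rule span_add)
    then show "x \<in> span (insert a ?D)" by simp
  qed
  then have "dim S \<le> dim (span (insert a ?D))" by (rule dim_subset)
  also have "\<dots> = dim (insert a ?D)" by simp
  also have "\<dots> \<le> dim ?D + 1" by (simp add: dim_insert)
  finally show ?thesis using ad by linarith
qed

lemma hits:
  fixes E :: "('n::finite \<times> 'n) set"
  assumes cl: "\<forall>j\<in>{1..t}. clique (proj_seq E W (j-1)) (W j)"
    and kp: "k_partite_classes (proj_seq E W (t-1)) (\<Union>i\<in>{1..t}. W i) k Ct"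
    and cW: "\<forall>j\<in>{1..t}. card (W j) = k"
    and i: "i \<in> {1..k}" and j: "j \<in> {1..t}"
  shows "card (Ct i \<inter> W j) = 1"
proof -
  let ?H = "proj_seq E W (t-1)"
  have stH: "stable_set ?H (Ct i)" using kp i by (simp add: k_partite_classes_def)
  have "clique (proj_seq E W (j-1)) (W j)" using cl j by blast
  moreover have "proj_seq E W (j-1) \<subseteq> ?H" using j by (intro proj_seq_mono) auto
  ultimately have clH: "clique ?H (W j)" by (rule clique_mono)
  have le: "card (Ct i \<inter> W j) \<le> 1" using card_stable_clique[OF stH clH] by (simp add: Int_commute)
  have "card (Ct i \<inter> W j) \<noteq> 0"
  proof
    assume "card (Ct i \<inter> W j) = 0"
    then have e: "Ct i \<inter> W j = {}" by simp
    have "W j \<subseteq> (\<Union>i\<in>{1..t}. W i)" using j by blast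
    also have "\<dots> = (\<Union>i\<in>{1..k}. Ct i)" using kp by (simp add: k_partite_classes_def)
    finally have "W j = (\<Union>i'\<in>{1..k} - {i}. Ct i' \<inter> W j)" using e by blast
    then have "card (W j) \<le> (\<Sum>i'\<in>{1..k} - {i}. card (Ct i' \<inter> W j))"
      by (metis card_UN_le finite_Diff finite_atLeastAtMost)
    also have "\<dots> \<le> (\<Sum>i'\<in>{1..k} - {i}. 1)"
    proof (rule sum_mono)
      fix i' assume i': "i' \<in> {1..k} - {i}"
      have "stable_set ?H (Ct i')" using kp i' by (simp add: k_partite_classes_def)
      then show "card (Ct i' \<inter> W j) \<le> 1" using card_stable_clique[OF _ clH] by (simp add: Int_commute)
    qed
    also have "\<dots> = k - 1" using i by simp
    finally show False using cW j i by auto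
  qed
  then show ?thesis using le by linarith
qed

lemma char_in_F:
  assumes "stable_set E S" "\<forall>j\<in>{1..t}. card (S \<inter> W j) = 1"
  shows "char_vec S \<in> F_face E W t"
  using assms by (auto simp: F_face_def STAB_def xsum_char_vec intro!: hull_inc)

lemma lower:
  fixes E :: "('n::finite \<times> 'n) set"
  assumes graph: "simple_graph E"
    and cl: "\<forall>j\<in>{1..t}. clique (proj_seq E W (j-1)) (W j)"
    and kp: "k_partite_classes (proj_seq E W (t-1)) (\<Union>i\<in>{1..t}. W i) k Ct"
    and cW: "\<forall>j\<in>{1..t}. card (W j) = k"
    and cardU: "card (\<Union>i\<in>{1..t}. W i) + 1 = k + t"
    and III: "\<forall>w \<in> UNIV - (\<Union>i\<in>{1..t}. W i). \<exists>i\<in>{1..k}. nbhd (proj_seq E W (t-1)) w \<inter> Ct i = {}"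
    and t: "t \<ge> 1" and kpos: "k > 0"
  shows "int CARD('n) - int t \<le> aff_dim (F_face E W t)"
proof -
  let ?H = "proj_seq E W (t-1)"
  let ?U = "\<Union>i\<in>{1..t}. W i"
  let ?F = "F_face E W t"
  have Uc: "?U = (\<Union>i\<in>{1..k}. Ct i)" using kp by (simp add: k_partite_classes_def)
  have disj: "\<And>i i'. i \<in> {1..k} \<Longrightarrow> i' \<in> {1..k} \<Longrightarrow> i \<noteq> i' \<Longrightarrow> Ct i \<inter> Ct i' = {}"
    using kp by (simp add: k_partite_classes_def)
  have stH: "\<And>i. i \<in> {1..k} \<Longrightarrow> stable_set ?H (Ct i)"
    using kp by (simp add: k_partite_classes_def)
  have EH: "E \<subseteq> ?H" using proj_seq_mono[of 0 "t-1" E W] by simp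
  have hit: "\<And>i j. i \<in> {1..k} \<Longrightarrow> j \<in> {1..t} \<Longrightarrow> card (Ct i \<inter> W j) = 1"
    using hits[OF cl kp cW] by blast
  have ne: "\<And>i. i \<in> {1..k} \<Longrightarrow> Ct i \<noteq> {}"
    using hit[of _ 1] t by fastforce
  have CinF: "\<And>i. i \<in> {1..k} \<Longrightarrow> char_vec (Ct i) \<in> ?F"
    using hit stH EH by (intro char_in_F) (auto intro: stable_mono)
  have simpH: "simple_graph ?H" using simple_proj_seq[OF graph] .
  have einspan: "char_vec {w} \<in> span ?F" if w: "w \<in> UNIV - ?U" for w
  proof -
    obtain i where i: "i \<in> {1..k}" and nb: "nbhd ?H w \<inter> Ct i = {}" using III w by blast
    have wC: "w \<notin> Ct i" using w i Uc by blast
    have "stable_set ?H (insert w (Ct i))"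
      unfolding stable_set_def
    proof (intro ballI)
      fix a b assume a: "a \<in> insert w (Ct i)" and b: "b \<in> insert w (Ct i)"
      have irr: "(w, w) \<notin> ?H" using simpH by (simp add: simple_graph_def)
      have wc: "\<And>c. c \<in> Ct i \<Longrightarrow> (w, c) \<notin> ?H" using nb by (auto simp: nbhd_def)
      have cw: "\<And>c. c \<in> Ct i \<Longrightarrow> (c, w) \<notin> ?H" using wc simpH
        by (metis simple_graph_def symD)
      have cc: "\<And>c d. c \<in> Ct i \<Longrightarrow> d \<in> Ct i \<Longrightarrow> (c, d) \<notin> ?H"
        using stH[OF i] by (simp add: stable_set_def)
      show "(a, b) \<notin> ?H" using a b irr wc cw cc by auto
    qed
    then have stE: "stable_set E (insert w (Ct i))" using EH by (rule stable_mono) auto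
    have "\<forall>j\<in>{1..t}. card (insert w (Ct i) \<inter> W j) = 1"
    proof
      fix j assume j: "j \<in> {1..t}"
      have "w \<notin> W j" using w j by blast
      then have "insert w (Ct i) \<inter> W j = Ct i \<inter> W j" by auto
      then show "card (insert w (Ct i) \<inter> W j) = 1" using hit[OF i j] by simp
    qed
    then have in1: "char_vec (insert w (Ct i)) \<in> ?F" using stE by (rule char_in_F[rotated])
    have eq: "char_vec {w} = char_vec (insert w (Ct i)) - char_vec (Ct i)"
      using wC by (auto simp: char_vec_def vec_eq_iff)
    show ?thesis unfolding eq using in1 CinF[OF i] by (intro span_diff span_base)
  qed
  define SB where "SB = Ct ` {1..k} \<union> (\<lambda>w. {w}) ` (UNIV - ?U)"
  define B where "B = char_vec ` SB"
  have Bspan: "B \<subseteq> span ?F" unfolding B_def SB_def using einspan CinF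
    by (auto intro: span_base)
  have SBdisj: "\<And>X Y. X \<in> SB \<Longrightarrow> Y \<in> SB \<Longrightarrow> X \<noteq> Y \<Longrightarrow> X \<inter> Y = {}"
  proof -
    fix X Y assume X: "X \<in> SB" and Y: "Y \<in> SB" and XY: "X \<noteq> Y"
    have UC: "\<And>i w. i \<in> {1..k} \<Longrightarrow> w \<in> UNIV - ?U \<Longrightarrow> w \<notin> Ct i" using Uc by blast
    from X consider (a) i where "i \<in> {1..k}" "X = Ct i" | (b) w where "w \<in> UNIV - ?U" "X = {w}"
      unfolding SB_def by blast
    then show "X \<inter> Y = {}"
    proof cases
      case a
      from Y consider (a) i' where "i' \<in> {1..k}" "Y = Ct i'" | (b) w' where "w' \<in> UNIV - ?U" "Y = {w'}"
        unfolding SB_def by blast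
      then show ?thesis
      proof cases
        case a': a
        then show ?thesis using a disj XY by blast
      next
        case b
        then show ?thesis using a UC by blast
      qed
    next
      case b
      from Y consider (a) i' where "i' \<in> {1..k}" "Y = Ct i'" | (b) w' where "w' \<in> UNIV - ?U" "Y = {w'}"
        unfolding SB_def by blast
      then show ?thesis
      proof cases
        case a
        then show ?thesis using b UC by blast
      next
        case b': b
        then show ?thesis using b XY by blast
      qed
    qed
  qed
  have SBne: "\<And>X. X \<in> SB \<Longrightarrow> X \<noteq> {}"
  proof -
    fix X assume "X \<in> SB"
    then consider (a) i where "i \<in> {1..k}" "X = Ct i" | (b) w where "X = {w}" unfolding SB_def by blast
    then show "X \<noteq> {}" using ne by cases auto
  qed
  have injc: "inj_on char_vec SB" by (meson char_vec_inj inj_onI)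
  have "pairwise orthogonal B"
    unfolding B_def pairwise_def
  proof (intro ballI impI)
    fix x y assume x: "x \<in> char_vec ` SB" and y: "y \<in> char_vec ` SB" and xy: "x \<noteq> y"
    obtain X Y where X: "X \<in> SB" "x = char_vec X" and Y: "Y \<in> SB" "y = char_vec Y" using x y by blast
    have "X \<inter> Y = {}" using SBdisj X Y xy by blast
    then show "orthogonal x y" unfolding orthogonal_def X Y inner_char_vec xsum_char_vec
      by (simp add: Int_commute)
  qed
  moreover have "0 \<notin> B"
  proof
    assume "0 \<in> B"
    then obtain X where X: "X \<in> SB" "char_vec X = 0" unfolding B_def by (metis imageE)
    have "char_vec {} = (0 :: real ^ 'n)" by (simp add: char_vec_def vec_eq_iff)
    then have "X = {}" using X char_vec_inj by metis
    then show False using SBne X by blast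
  qed
  ultimately have ind: "independent B" by (rule pairwise_orthogonal_independent)
  have "card B \<le> dim (span ?F)" using independent_card_le_dim[OF Bspan ind] .
  then have cB: "card B \<le> dim ?F" by simp
  have "card B = card SB" unfolding B_def using card_image[OF injc] .
  also have "card SB = card (Ct ` {1..k}) + card ((\<lambda>w. {w}) ` (UNIV - ?U))"
    unfolding SB_def
  proof (rule card_Un_disjoint)
    show "Ct ` {1..k} \<inter> (\<lambda>w. {w}) ` (UNIV - ?U) = {}" using Uc by fastforce
  qed simp_all
  also have "card (Ct ` {1..k}) = k"
  proof -
    have "inj_on Ct {1..k}"
    proof (rule inj_onI)
      fix i i' assume "i \<in> {1..k}" "i' \<in> {1..k}" "Ct i = Ct i'"
      then show "i = i'" using disj ne by fastforce
    qed
    then show ?thesis by (simp add: card_image)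
  qed
  also have "card ((\<lambda>w. {w}) ` (UNIV - ?U)) = card (UNIV - ?U)"
    by (rule card_image) (simp add: inj_on_def)
  also have "card (UNIV - ?U) = CARD('n) - card ?U" by (simp add: card_Diff_subset)
  finally have cB2: "card B = k + (CARD('n) - card ?U)" .
  have "card ?U \<le> CARD('n)" by (simp add: card_mono)
  then have "int (card B) = int CARD('n) - int t + 1" using cB2 cardU by linarith
  moreover have "?F \<noteq> {}" using CinF[of 1] kpos by auto
  then obtain a where "a \<in> ?F" by blast
  then have "int (dim ?F) \<le> aff_dim ?F + 1" by (rule dim_le_aff_dim)
  ultimately show ?thesis using cB by linarith
qed

lemma witness:
  fixes E :: "('n::finite \<times> 'n) set"
  assumes cl: "\<forall>j\<in>{1..t}. clique (proj_seq E W (j-1)) (W j)"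
    and kp: "k_partite_classes (proj_seq E W (t-1)) (\<Union>i\<in>{1..t}. W i) k Ct"
    and cW: "\<forall>j\<in>{1..t}. card (W j) = k"
    and t: "t \<ge> 1"
    and v: "v \<in> W t" "v \<notin> (\<Union>i\<in>{1..t-1}. W i)"
  shows "\<exists>x\<in>F_face E W (t-1). char_vec (W t) \<bullet> x = 0"
proof -
  let ?H = "proj_seq E W (t-1)"
  have "t \<in> {1..t}" using t by simp
  then have "v \<in> (\<Union>i\<in>{1..t}. W i)" using v(1) by (rule UN_I)
  also have "\<dots> = (\<Union>i\<in>{1..k}. Ct i)" using kp by (simp add: k_partite_classes_def)
  finally obtain i where i: "i \<in> {1..k}" and vi: "v \<in> Ct i" by blast
  have hit: "\<And>j. j \<in> {1..t} \<Longrightarrow> card (Ct i \<inter> W j) = 1"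
    using hits[OF cl kp cW i] by blast
  have EH: "E \<subseteq> ?H" using proj_seq_mono[of 0 "t-1" E W] by simp
  have stH: "stable_set ?H (Ct i)" using kp i by (simp add: k_partite_classes_def)
  have stE: "stable_set E (Ct i - {v})" by (rule stable_mono[OF stH EH]) blast
  have "\<forall>j\<in>{1..t-1}. card ((Ct i - {v}) \<inter> W j) = 1"
  proof
    fix j assume j: "j \<in> {1..t-1}"
    then have "v \<notin> W j" using v(2) by blast
    then have "(Ct i - {v}) \<inter> W j = Ct i \<inter> W j" by auto
    moreover have "j \<in> {1..t}" using j by auto
    ultimately show "card ((Ct i - {v}) \<inter> W j) = 1" using hit[of j] by simp
  qed
  then have inF: "char_vec (Ct i - {v}) \<in> F_face E W (t-1)" using stE by (rule char_in_F[rotated])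
  have "card (Ct i \<inter> W t) = 1" using hit[OF \<open>t \<in> {1..t}\<close>] .
  then obtain y where y: "Ct i \<inter> W t = {y}" by (meson card_1_singletonE)
  moreover have "v \<in> Ct i \<inter> W t" using vi v(1) by blast
  ultimately have "y = v" by simp
  then have "(Ct i - {v}) \<inter> W t = {}" using y by auto
  then have "char_vec (W t) \<bullet> char_vec (Ct i - {v}) = 0" by (simp add: inner_char_vec xsum_char_vec)
  then show ?thesis using inF by blast
qed

lemma F_face_alt: "F_face E W m = STAB E \<inter> (\<Inter>j\<in>{1..m}. {x. char_vec (W j) \<bullet> x = 1})"
  by (auto simp: F_face_def inner_char_vec)

lemma convex_F: "convex (F_face E W m)"
  unfolding F_face_alt STAB_def
  by (intro convex_Int convex_INT convex_convex_hull) (simp add: convex_hyperplane)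

lemma F_face_Suc: "t \<ge> 1 \<Longrightarrow> F_face E W t = F_face E W (t-1) \<inter> {x. char_vec (W t) \<bullet> x = 1}"
  unfolding F_face_alt
proof -
  assume "t \<ge> 1"
  then have "{1..t} = insert t {1..t-1}" by auto
  then show "STAB E \<inter> (\<Inter>j\<in>{1..t}. {x. char_vec (W j) \<bullet> x = 1}) =
    STAB E \<inter> (\<Inter>j\<in>{1..t - 1}. {x. char_vec (W j) \<bullet> x = 1}) \<inter> {x. char_vec (W t) \<bullet> x = 1}"
    by auto
qed

theorem theorem2:
  fixes E :: "('n::finite \<times> 'n) set"
    and W :: "nat \<Rightarrow> 'n set"
    and r k :: nat
    and C :: "nat \<Rightarrow> nat \<Rightarrow> 'n set"
  assumes graph: "simple_graph E"
    and distinct: "inj_on W {1..r}"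
    and cliques: "\<forall>t\<in>{1..r}. clique (proj_seq E W (t - 1)) (W t) \<and> card (W t) \<ge> 2"
    and kpos: "k > 0"
    and I: "\<forall>t\<in>{1..r}. card (W t) = k \<and>
              k_partite_classes (proj_seq E W (t - 1)) (\<Union>i\<in>{1..t}. W i) k (C t)"
    and II: "\<forall>t\<in>{1..r}. strong_hypertree k (\<Union>i\<in>{1..k}. C t i) (W ` {1..t})"
    and III: "\<forall>t\<in>{1..r}. \<forall>w \<in> UNIV - (\<Union>i\<in>{1..k}. C t i).
                \<exists>i\<in>{1..k}. nbhd (proj_seq E W (t - 1)) w \<inter> C t i = {}"
  shows "\<forall>t\<in>{1..r}. facet_defining (F_face E W (t - 1)) (char_vec (W t)) 1"
proof -
  let ?n = "int CARD('n)"
  define a where "a m = aff_dim (F_face E W m)" for m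
  let ?U = "\<lambda>t. \<Union>i\<in>{1..t}. W i"
  have cl: "\<forall>j\<in>{1..t}. clique (proj_seq E W (j-1)) (W j)" if tr: "t \<le> r" for t
  proof
    fix j assume "j \<in> {1..t}"
    then have "j \<in> {1..r}" using tr by auto
    then show "clique (proj_seq E W (j-1)) (W j)" using cliques by blast
  qed
  have cW: "\<forall>j\<in>{1..t}. card (W j) = k" if tr: "t \<le> r" for t
  proof
    fix j assume "j \<in> {1..t}"
    then have "j \<in> {1..r}" using tr by auto
    then show "card (W j) = k" using I by blast
  qed
  have kp: "k_partite_classes (proj_seq E W (t-1)) (?U t) k (C t)" if t: "t \<in> {1..r}" for t
    using I t by blast
  have Ueq: "(\<Union>i\<in>{1..k}. C t i) = ?U t" if t: "t \<in> {1..r}" for t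
    using kp[OF t] by (simp add: k_partite_classes_def)
  have cardU: "card (?U t) + 1 = k + t" if t: "t \<in> {1..r}" for t
  proof -
    have "strong_hypertree k (\<Union>i\<in>{1..k}. C t i) (W ` {1..t})" using II t by blast
    then have ht: "strong_hypertree k (?U t) (W ` {1..t})" unfolding Ueq[OF t] .
    have "{1..t} \<subseteq> {1..r}" using t by auto
    then have "inj_on W {1..t}" using distinct inj_on_subset by blast
    then have "card (W ` {1..t}) = t" by (simp add: card_image)
    then show ?thesis using hypertree_card[OF ht] by simp
  qed
  have III': "\<forall>w \<in> UNIV - ?U t. \<exists>i\<in>{1..k}. nbhd (proj_seq E W (t-1)) w \<inter> C t i = {}"
    if t: "t \<in> {1..r}" for t
  proof -
    have "\<forall>w \<in> UNIV - (\<Union>i\<in>{1..k}. C t i). \<exists>i\<in>{1..k}. nbhd (proj_seq E W (t-1)) w \<inter> C t i = {}"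
      using III t by blast
    then show ?thesis unfolding Ueq[OF t] .
  qed
  have low: "?n - int t \<le> a t" if t: "t \<in> {1..r}" for t
  proof -
    have tr: "t \<le> r" and t1: "t \<ge> 1" using t by auto
    show ?thesis unfolding a_def
      by (rule lower[OF graph cl[OF tr] kp[OF t] cW[OF tr] cardU[OF t] III'[OF t] t1 kpos])
  qed
  have valid: "\<forall>x\<in>F_face E W (t-1). char_vec (W t) \<bullet> x \<le> 1" if t: "t \<in> {1..r}" for t
  proof
    fix x assume x: "x \<in> F_face E W (t-1)"
    have tr: "t \<le> r" and t1: "t \<ge> 1" using t by auto
    show "char_vec (W t) \<bullet> x \<le> 1" by (rule validity[OF cl[OF tr] x t1])
  qed
  have strict: "a t < a (t-1)" if t: "t \<in> {1..r}" for t
  proof -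
    have tr: "t \<le> r" and t1: "t \<ge> 1" using t by auto
    have Usplit: "?U t = W t \<union> ?U (t-1)"
    proof -
      have "{1..t} = insert t {1..t-1}" using t1 by auto
      then show ?thesis by simp
    qed
    obtain v where v: "v \<in> W t" "v \<notin> ?U (t-1)"
    proof (cases "t = 1")
      case True
      have "card (W 1) = k" using cW[OF tr] True by simp
      then have "W 1 \<noteq> {}" using kpos by auto
      then obtain v where "v \<in> W 1" by blast
      then show ?thesis using that True by simp
    next
      case False
      then have t'': "t - 1 \<in> {1..r}" using t by auto
      have c1: "card (?U (t-1)) + 1 = k + (t-1)" using cardU[OF t''] .
      have c2: "card (?U t) + 1 = k + t" using cardU[OF t] .
      have "\<not> W t \<subseteq> ?U (t-1)"
      proof
        assume "W t \<subseteq> ?U (t-1)"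
        then have "?U t = ?U (t-1)" using Usplit by blast
        then show False using c1 c2 t1 by simp
      qed
      then show ?thesis using that by blast
    qed
    obtain x where x: "x \<in> F_face E W (t-1)" "char_vec (W t) \<bullet> x = 0"
      using witness[OF cl[OF tr] kp[OF t] cW[OF tr] t1 v] by blast
    have face: "F_face E W t face_of F_face E W (t-1)"
      unfolding F_face_Suc[OF t1]
      by (rule face_of_Int_supporting_hyperplane_le[OF convex_F]) (use valid[OF t] in blast)
    have ne: "F_face E W t \<noteq> F_face E W (t-1)"
    proof
      assume "F_face E W t = F_face E W (t-1)"
      then have "x \<in> F_face E W t" using x(1) by simp
      then have "char_vec (W t) \<bullet> x = 1" unfolding F_face_Suc[OF t1, of E W] by simp
      then show False using x(2) by simp
    qed
    show ?thesis unfolding a_def by (rule face_of_aff_dim_lt[OF convex_F face ne])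
  qed
  have ub: "t \<le> r \<Longrightarrow> a t \<le> ?n - int t" for t
  proof (induction t)
    case 0
    show ?case unfolding a_def using aff_dim_le_DIM[of "F_face E W 0"] by simp
  next
    case (Suc t)
    then have "Suc t \<in> {1..r}" by auto
    then have "a (Suc t) < a t" using strict by fastforce
    moreover have "a t \<le> ?n - int t" using Suc by simp
    ultimately show ?case by simp
  qed
  show ?thesis
  proof
    fix t assume t: "t \<in> {1..r}"
    have tr: "t \<le> r" and t1: "t \<ge> 1" using t by auto
    have at: "a t = ?n - int t" using low[OF t] ub[OF tr] by simp
    have "a (t-1) \<le> ?n - int (t-1)" using ub tr by simp
    then have at1: "a (t-1) = ?n - int t + 1" using strict[OF t] at t1 by (simp add: of_nat_diff)
    have eqF: "{x \<in> F_face E W (t-1). char_vec (W t) \<bullet> x = 1} = F_face E W t"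
      unfolding F_face_Suc[OF t1, of E W] by auto
    show "facet_defining (F_face E W (t - 1)) (char_vec (W t)) 1"
      unfolding facet_defining_def eqF
      using valid[OF t] at at1 by (simp add: a_def)
  qed
qed

end
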